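(* Let $\mathbf a^*=\{a^*_i\}_{i\in\mathbb Z}$ be a finitely supported mask such that the stationary subdivision scheme $\{S_{\mathbf a^*}\}$ (using the mask $\mathbf a^*$ at every level) is convergent, and suppose there is a positive integer $n$ with $\mu^*:=\|(S_{\mathbf q^*})^n\|<1$, where $\{S_{\mathbf q^*}\}$ is the difference scheme of $\{S_{\mathbf a^*}\}$. Let $\{S_{\mathbf a^{[k]}},\,k\ge 0\}$ be a local non-stationary subdivision scheme that reproduces constants and is asymptotically similar to $\{S_{\mathbf a^*}\}$, i.e. $\lim_{k\to\infty}\|\mathbf a^{[k]}-\mathbf a^*\|=0$. Then $\{S_{\mathbf a^{[k]}},\,k\ge 0\}$ is convergent, and for every $\eta\in((\mu^* )^{1/n},1)$ there exists a constant $C>0$ such that for every bounded initial sequence $\mathbf f^{[0]}$, $$\Big\|S^\infty_{\{\mathbf a^{[k]},\,k\ge0\}}\mathbf f^{[0]}-\mathcal{PL}(\mathbf f^{[k+1]})\Big\|\le C\,\eta^k\,\|\Delta\mathbf f^{[0]}\|,\qquad k\ge 0.$$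
   Context: A (binary, uniform) subdivision scheme $\{S_{\mathbf a^{[k]}},\,k\ge0\}$ is given by finitely supported masks $\mathbf a^{[k]}=\{a^{[k]}_i\}_{i\in\mathbb Z}$ and operators $(S_{\mathbf a^{[k]}}\mathbf f)_i=\sum_{j\in\mathbb Z}a^{[k]}_{i-2j}f_j$ on sequences $\mathbf f\in\mathbb R^{\mathbb Z}$; starting from $\mathbf f^{[0]}$ one sets $\mathbf f^{[k+1]}=S_{\mathbf a^{[k]}}\mathbf f^{[k]}$, the values $f^{[k]}_i$ being attached to the points $i2^{-k}$. The scheme is local: there is a positive integer $N$ with $\{i: a^{[k]}_i\neq0\}\subseteq[-N,N]$ for all $k$. It is stationary if $\mathbf a^{[k]}$ does not depend on $k$. All norms are sup-norms: for sequences $\|\mathbf f\|=\sup_i|f_i|$, and for operators $\|S_{\mathbf a}\|=\max\big(\sum_i|a_{2i}|,\sum_i|a_{2i+1}|\big)$ (the operator norm on bounded sequences with the sup-norm). The scheme reproduces constants if $\sum_i a^{[k]}_{2i}=\sum_i a^{[k]}_{2i+1}=1$ for all $k$; then the symbol $a^{[k]}(z)=\sum_i a^{[k]}_iz^i$ factors as $(1+z)q^{[k]}(z)$ with $q^{[k]}_i=\sum_{j\le i}(-1)^{i-j}a^{[k]}_j$, and $\{S_{\mathbf q^{[k]}},\,k\ge0\}$ is called the difference scheme; it satisfies $\Delta\mathbf f^{[k+1]}=S_{\mathbf q^{[k]}}\Delta\mathbf f^{[k]}$, where $(\Delta\mathbf f)_i=f_i-f_{i-1}$. $\mathcal{PL}(\mathbf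 f^{[k]})$ denotes the piecewise linear function on $\mathbb R$ interpolating $f^{[k]}_i$ at $i2^{-k}$. The scheme is convergent if for every bounded $\mathbf f^{[0]}$ the functions $\mathcal{PL}(\mathbf f^{[k]})$ converge uniformly on $\mathbb R$; the limit is denoted $S^\infty_{\{\mathbf a^{[k]},\,k\ge0\}}\mathbf f^{[0]}$. Two schemes $\{S_{\mathbf a^{[k]}}\}$, $\{S_{\mathbf a^{*[k]}}\}$ are asymptotically similar if $\lim_{k\to\infty}\|\mathbf a^{[k]}-\mathbf a^{*[k]}\|=0$. *)

theory Defs
  imports "HOL-Analysis.Analysis"
begin

type_synonym mask = "int \<Rightarrow> real"
type_synonym sequence = "int \<Rightarrow> real"

definition fin_supp :: "mask \<Rightarrow> bool" where
  "fin_supp a \<longleftrightarrow> finite {i. a i \<noteq> 0}"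

definition subd :: "mask \<Rightarrow> sequence \<Rightarrow> sequence" where
  "subd a f i = (\<Sum>j\<in>{j. a (i - 2*j) \<noteq> 0}. a (i - 2*j) * f j)"

fun iter_seq :: "(nat \<Rightarrow> mask) \<Rightarrow> sequence \<Rightarrow> nat \<Rightarrow> sequence" where
  "iter_seq a f 0 = f"
| "iter_seq a f (Suc k) = subd (a k) (iter_seq a f k)"

definition bounded_seq :: "sequence \<Rightarrow> bool" where
  "bounded_seq f \<longleftrightarrow> bdd_above (range (\<lambda>i. \<bar>f i\<bar>))"

definition seq_norm :: "sequence \<Rightarrow> real" where
  "seq_norm f = (SUP i. \<bar>f i\<bar>)"

definition diff :: "sequence \<Rightarrow> sequence" where
  "diff f i = f i - f (i - 1)"

definition PL :: "sequence \<Rightarrow> nat \<Rightarrow> real \<Rightarrow> real" where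
  "PL g k x = (let t = x * 2 ^ k; i = \<lfloor>t\<rfloor>
               in (1 - (t - of_int i)) * g i + (t - of_int i) * g (i + 1))"

definition convergent_scheme :: "(nat \<Rightarrow> mask) \<Rightarrow> bool" where
  "convergent_scheme a \<longleftrightarrow>
     (\<forall>f. bounded_seq f \<longrightarrow>
        (\<exists>g. uniform_limit UNIV (\<lambda>k x. PL (iter_seq a f k) k x) g sequentially))"

definition limit_fun :: "(nat \<Rightarrow> mask) \<Rightarrow> sequence \<Rightarrow> real \<Rightarrow> real" where
  "limit_fun a f = (THE g. uniform_limit UNIV (\<lambda>k x. PL (iter_seq a f k) k x) g sequentially)"

definition local_scheme :: "(nat \<Rightarrow> mask) \<Rightarrow> bool" where
  "local_scheme a \<longleftrightarrow> (\<exists>N::int. N > 0 \<and> (\<forall>k i. a k i \<noteq> 0 \<longrightarrow> i \<in> {-N..N}))"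

definition reproduces_constants :: "(nat \<Rightarrow> mask) \<Rightarrow> bool" where
  "reproduces_constants a \<longleftrightarrow>
     (\<forall>k. (\<Sum>i\<in>{i. a k (2*i) \<noteq> 0}. a k (2*i)) = 1
        \<and> (\<Sum>i\<in>{i. a k (2*i+1) \<noteq> 0}. a k (2*i+1)) = 1)"

definition diff_mask :: "mask \<Rightarrow> mask" where
  "diff_mask a i = (\<Sum>j\<in>{j. j \<le> i \<and> a j \<noteq> 0}. (-1) ^ nat (i - j) * a j)"

definition op_norm_pow :: "mask \<Rightarrow> nat \<Rightarrow> real" where
  "op_norm_pow a n =
     (SUP f\<in>{f. bounded_seq f \<and> seq_norm f \<le> 1}. seq_norm ((subd a ^^ n) f))"

end

theory Submission
  imports Defs
begin


lemma seq_norm_upper: "bounded_seq g \<Longrightarrow> \<bar>g i\<bar> \<le> seq_norm g"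
  unfolding seq_norm_def bounded_seq_def by (rule cSUP_upper) auto

lemma seq_norm_nonneg: "bounded_seq g \<Longrightarrow> 0 \<le> seq_norm g"
  using seq_norm_upper[of g 0] by linarith

lemma seq_norm_least: "(\<And>i. \<bar>g i\<bar> \<le> c) \<Longrightarrow> seq_norm g \<le> c"
  unfolding seq_norm_def by (rule cSUP_least) auto

lemma bounded_seqI: "(\<And>i. \<bar>g i\<bar> \<le> c) \<Longrightarrow> bounded_seq g"
  unfolding bounded_seq_def by (rule bdd_aboveI[of _ c]) auto

lemma bounded_diff_seq: "bounded_seq f \<Longrightarrow> bounded_seq g \<Longrightarrow> bounded_seq (\<lambda>i. f i - g i)"
proof (rule bounded_seqI[of _ "seq_norm f + seq_norm g"])
  fix i assume "bounded_seq f" "bounded_seq g"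
  then show "\<bar>f i - g i\<bar> \<le> seq_norm f + seq_norm g"
    using seq_norm_upper[of f i] seq_norm_upper[of g i] by linarith
qed

lemma bounded_diff: "bounded_seq f \<Longrightarrow> bounded_seq (diff f)"
proof -
  assume b: "bounded_seq f"
  have "bounded_seq (\<lambda>i. f (i - 1))"
    by (rule bounded_seqI[of _ "seq_norm f"]) (rule seq_norm_upper[OF b])
  then show ?thesis unfolding diff_def by (rule bounded_diff_seq[OF b])
qed

lemma seq_norm_zero: "bounded_seq g \<Longrightarrow> seq_norm g = 0 \<Longrightarrow> g i = 0"
  using seq_norm_upper[of g i] by simp

lemma subd_sum: "finite A \<Longrightarrow> {j. b (i - 2*j) \<noteq> 0} \<subseteq> A \<Longrightarrow>
   subd b f i = (\<Sum>j\<in>A. b (i - 2*j) * f j)"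
  unfolding subd_def by (rule sum.mono_neutral_right[symmetric]) auto

definition supp_in :: "mask \<Rightarrow> int \<Rightarrow> bool" where
  "supp_in b M \<longleftrightarrow> (\<forall>i. b i \<noteq> 0 \<longrightarrow> -M \<le> i \<and> i \<le> M)"

definition W :: "int \<Rightarrow> int \<Rightarrow> int set" where
  "W M i = {j. -M \<le> i - 2*j \<and> i - 2*j \<le> M}"

definition nb :: "int \<Rightarrow> mask \<Rightarrow> real" where
  "nb M b = (\<Sum>m\<in>{-M..M}. \<bar>b m\<bar>)"

lemma finite_W: "finite (W M i)"
proof -
  have "W M i \<subseteq> {-\<bar>i\<bar>-\<bar>M\<bar> .. \<bar>i\<bar>+\<bar>M\<bar>}" unfolding W_def by auto
  then show ?thesis by (rule finite_subset) simp
qed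

lemma supp_W: "supp_in b M \<Longrightarrow> {j. b (i - 2*j) \<noteq> 0} \<subseteq> W M i"
  unfolding supp_in_def W_def by auto

lemma subd_W: "supp_in b M \<Longrightarrow> subd b f i = (\<Sum>j\<in>W M i. b (i - 2*j) * f j)"
  by (rule subd_sum[OF finite_W supp_W])

lemma nb_nonneg: "0 \<le> nb M b"
  unfolding nb_def by (rule sum_nonneg) auto

lemma sum_abs_W: "supp_in b M \<Longrightarrow> (\<Sum>j\<in>W M i. \<bar>b (i - 2*j)\<bar>) \<le> nb M b"
proof -
  have inj: "inj_on (\<lambda>j. i - 2*j) (W M i)" by (rule inj_onI) auto
  have "(\<Sum>j\<in>W M i. \<bar>b (i - 2*j)\<bar>) = (\<Sum>m\<in>(\<lambda>j. i - 2*j) ` W M i. \<bar>b m\<bar>)"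
    by (simp add: sum.reindex[OF inj])
  also have "\<dots> \<le> nb M b" unfolding nb_def
    by (rule sum_mono2) (auto simp: W_def)
  finally show ?thesis .
qed

lemma subd_bound:
  assumes "supp_in b M" "bounded_seq g"
  shows "\<bar>subd b g i\<bar> \<le> nb M b * seq_norm g"
proof -
  have "\<bar>subd b g i\<bar> \<le> (\<Sum>j\<in>W M i. \<bar>b (i - 2*j) * g j\<bar>)"
    unfolding subd_W[OF assms(1)] by (rule sum_abs)
  also have "\<dots> \<le> (\<Sum>j\<in>W M i. \<bar>b (i - 2*j)\<bar> * seq_norm g)"
    by (rule sum_mono) (simp add: abs_mult mult_left_mono seq_norm_upper[OF assms(2)])
  also have "\<dots> = (\<Sum>j\<in>W M i. \<bar>b (i - 2*j)\<bar>) * seq_norm g"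
    by (simp add: sum_distrib_right)
  also have "\<dots> \<le> nb M b * seq_norm g"
    by (rule mult_right_mono[OF sum_abs_W[OF assms(1)] seq_norm_nonneg[OF assms(2)]])
  finally show ?thesis .
qed

lemma subd_bounded: "supp_in b M \<Longrightarrow> bounded_seq g \<Longrightarrow> bounded_seq (subd b g)"
  by (rule bounded_seqI[OF subd_bound])

lemma subd_norm: "supp_in b M \<Longrightarrow> bounded_seq g \<Longrightarrow> seq_norm (subd b g) \<le> nb M b * seq_norm g"
  by (rule seq_norm_least[OF subd_bound])

lemma subd_minus: "supp_in b M \<Longrightarrow> subd b (\<lambda>i. f i - g i) i = subd b f i - subd b g i"
  by (simp add: subd_W algebra_simps sum_subtractf)

lemma subd_scale: "supp_in b M \<Longrightarrow> subd b (\<lambda>i. c * f i) i = c * subd b f i"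
  by (simp add: subd_W algebra_simps sum_distrib_left)

lemma supp_in_minus: "supp_in b M \<Longrightarrow> supp_in c M \<Longrightarrow> supp_in (\<lambda>i. b i - c i) M"
  unfolding supp_in_def by (metis diff_self)

lemma subd_mask_minus: "supp_in b M \<Longrightarrow> supp_in c M \<Longrightarrow>
   subd (\<lambda>i. b i - c i) f i = subd b f i - subd c f i"
  using supp_in_minus[of b M c]
  by (simp add: subd_W algebra_simps sum_subtractf)



definition rc :: "mask \<Rightarrow> bool" where
  "rc b \<longleftrightarrow> (\<Sum>i\<in>{i. b (2*i) \<noteq> 0}. b (2*i)) = 1 \<and> (\<Sum>i\<in>{i. b (2*i+1) \<noteq> 0}. b (2*i+1)) = 1"

lemma dm_formula: "supp_in b M \<Longrightarrow> diff_mask b i = (\<Sum>j\<in>{-M..i}. (-1) ^ nat (i - j) * b j)"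
  unfolding diff_mask_def supp_in_def
  by (rule sum.mono_neutral_right[symmetric]) auto

lemma dm_low: "supp_in b M \<Longrightarrow> i < -M \<Longrightarrow> diff_mask b i = 0"
  by (simp add: dm_formula)

lemma dm_rec:
  assumes s: "supp_in b M"
  shows "diff_mask b i = b i - diff_mask b (i - 1)"
proof (cases "i < -M")
  case True
  then have "b i = 0" using s unfolding supp_in_def by force
  then show ?thesis using True dm_low[OF s] by simp
next
  case False
  have set: "{-M..i} = insert i {-M..i-1}" using False by auto
  have "diff_mask b i = b i + (\<Sum>j\<in>{-M..i-1}. (-1) ^ nat (i - j) * b j)"
    unfolding dm_formula[OF s] set by (subst sum.insert) auto
  also have "(\<Sum>j\<in>{-M..i-1}. (-1) ^ nat (i - j) * b j) = - diff_mask b (i - 1)"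
    unfolding dm_formula[OF s] sum_negf[symmetric]
  proof (rule sum.cong)
    fix j assume "j \<in> {-M..i-1}"
    then have "nat (i - j) = Suc (nat (i - 1 - j))" by auto
    then show "(-1) ^ nat (i - j) * b j = - ((-1) ^ nat (i - 1 - j) * b j)" by simp
  qed simp
  finally show ?thesis by simp
qed

lemma dm_even:
  assumes s: "supp_in b M" and M: "M > 0"
  shows "diff_mask b (2*(-M) + 2*int h) = (\<Sum>l<h. b (2*(-M) + 2*int l + 2) - b (2*(-M) + 2*int l + 1))"
proof (induction h)
  case 0
  then show ?case using dm_low[OF s, of "2*(-M)"] M by simp
next
  case (Suc h)
  have "diff_mask b (2*(-M) + 2*int (Suc h)) = b (2*(-M) + 2*int h + 2) - diff_mask b (2*(-M) + 2*int h + 1)"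
    using dm_rec[OF s, of "2*(-M) + 2*int (Suc h)"] by (simp add: algebra_simps)
  also have "diff_mask b (2*(-M) + 2*int h + 1) = b (2*(-M) + 2*int h + 1) - diff_mask b (2*(-M) + 2*int h)"
    using dm_rec[OF s, of "2*(-M) + 2*int h + 1"] by simp
  finally show ?case using Suc by simp
qed

lemma rc_even_sum:
  assumes s: "supp_in b M" and M: "M > 0" and rc: "rc b" and h: "M \<le> 2*(-M + int h)"
  shows "(\<Sum>l<h. b (2*(-M) + 2*int l + 2)) = 1"
proof -
  let ?f = "\<lambda>l::nat. -M + int l + 1"
  have inj: "inj_on ?f {..<h}" by (rule inj_onI) auto
  have "(\<Sum>l<h. b (2*(-M) + 2*int l + 2)) = (\<Sum>l<h. b (2*?f l))"
    by (rule sum.cong) (simp_all add: algebra_simps)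
  also have "\<dots> = (\<Sum>m\<in>?f ` {..<h}. b (2*m))"
    by (subst sum.reindex[OF inj]) (simp add: comp_def)
  also have "\<dots> = (\<Sum>m\<in>{m. b (2*m) \<noteq> 0}. b (2*m))"
  proof (rule sum.mono_neutral_right)
    show "{m. b (2*m) \<noteq> 0} \<subseteq> ?f ` {..<h}"
    proof
      fix m assume "m \<in> {m. b (2*m) \<noteq> 0}"
      then have "-M \<le> 2*m" "2*m \<le> M" using s unfolding supp_in_def by auto
      then have "m = ?f (nat (m + M - 1))" "nat (m + M - 1) < h" using M h by auto
      then show "m \<in> ?f ` {..<h}" by blast
    qed
  qed auto
  finally show ?thesis using rc unfolding rc_def by simp
qed

lemma rc_odd_sum:
  assumes s: "supp_in b M" and M: "M > 0" and rc: "rc b" and h: "M \<le> 2*(-M + int h)"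
  shows "(\<Sum>l<h. b (2*(-M) + 2*int l + 1)) = 1"
proof -
  let ?f = "\<lambda>l::nat. -M + int l"
  have inj: "inj_on ?f {..<h}" by (rule inj_onI) auto
  have "(\<Sum>l<h. b (2*(-M) + 2*int l + 1)) = (\<Sum>l<h. b (2*?f l+1))"
    by (rule sum.cong) (simp_all add: algebra_simps)
  also have "\<dots> = (\<Sum>m\<in>?f ` {..<h}. b (2*m+1))"
    by (subst sum.reindex[OF inj]) (simp add: comp_def)
  also have "\<dots> = (\<Sum>m\<in>{m. b (2*m+1) \<noteq> 0}. b (2*m+1))"
  proof (rule sum.mono_neutral_right)
    show "{m. b (2*m+1) \<noteq> 0} \<subseteq> ?f ` {..<h}"
    proof
      fix m assume "m \<in> {m. b (2*m+1) \<noteq> 0}"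
      then have "-M \<le> 2*m+1" "2*m+1 \<le> M" using s unfolding supp_in_def by auto
      then have "m = ?f (nat (m + M))" "nat (m + M) < h" using M h by auto
      then show "m \<in> ?f ` {..<h}" by blast
    qed
  qed auto
  finally show ?thesis using rc unfolding rc_def by simp
qed

lemma dm_even_high:
  assumes s: "supp_in b M" and M: "M > 0" and rc: "rc b" and r: "M \<le> 2*r"
  shows "diff_mask b (2*r) = 0"
proof -
  define h where "h = nat (r + M)"
  have r': "r = -M + int h" using r M unfolding h_def by auto
  have hh: "M \<le> 2*(-M + int h)" using r r' by simp
  have "diff_mask b (2*r) = diff_mask b (2*(-M) + 2*int h)" by (rule arg_cong[where f="diff_mask b"]) (use r' in simp)
  also have "\<dots> = 0" unfolding dm_even[OF s M] sum_subtractf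
    rc_even_sum[OF s M rc hh] rc_odd_sum[OF s M rc hh] by simp
  finally show ?thesis .
qed

lemma dm_supp:
  assumes s: "supp_in b M" and M: "M > 0" and rc: "rc b"
  shows "supp_in (diff_mask b) M"
  unfolding supp_in_def
proof (intro allI impI)
  fix i assume nz: "diff_mask b i \<noteq> 0"
  have "\<not> i < -M" using dm_low[OF s] nz by auto
  moreover have "\<not> i > M"
  proof
    assume i: "i > M"
    obtain r where "i = 2*r \<or> i = 2*r+1" by (metis dvd_def odd_two_times_div_two_succ)
    then show False
    proof
      assume "i = 2*r" then show False using dm_even_high[OF s M rc, of r] i nz by simp
    next
      assume ir: "i = 2*r+1"
      have "b i = 0" using s i unfolding supp_in_def by force
      then show False using dm_rec[OF s, of i] dm_even_high[OF s M rc, of r] ir i nz by simp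
    qed
  qed
  ultimately show "-M \<le> i \<and> i \<le> M" by simp
qed



lemma sum_on_W:
  assumes "supp_in c M" "finite T" "W M k \<subseteq> T"
  shows "(\<Sum>j\<in>T. c (k - 2*j) * f j) = (\<Sum>j\<in>W M k. c (k - 2*j) * f j)"
  using assms unfolding supp_in_def W_def
  by (intro sum.mono_neutral_right) auto

lemma diff_subd:
  assumes s: "supp_in b M" and M: "M > 0" and rc: "rc b"
  shows "diff (subd b f) = subd (diff_mask b) (diff f)"
proof
  fix i
  let ?q = "diff_mask b"
  have sq: "supp_in ?q M" by (rule dm_supp[OF s M rc])
  let ?T = "W (M+2) i"
  have fT: "finite ?T" by (rule finite_W)
  have e1: "subd b f i = (\<Sum>j\<in>?T. b (i - 2*j) * f j)"
    by (rule subd_sum[OF fT]) (use supp_W[OF s, of i] in \<open>auto simp: W_def\<close>)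
  have e2: "subd b f (i-1) = (\<Sum>j\<in>?T. b (i - 1 - 2*j) * f j)"
    by (rule subd_sum[OF fT]) (use supp_W[OF s, of "i-1"] in \<open>auto simp: W_def\<close>)
  have e3: "subd ?q (diff f) i = (\<Sum>j\<in>?T. ?q (i - 2*j) * f j) - (\<Sum>j\<in>?T. ?q (i - 2*j) * f (j - 1))"
  proof -
    have sub: "W M i \<subseteq> ?T" by (auto simp: W_def)
    show ?thesis
      unfolding subd_sum[OF fT order.trans[OF supp_W[OF sq, of i] sub]] diff_def
      by (simp add: algebra_simps sum_subtractf)
  qed
  have inj: "inj_on (\<lambda>j. j - 1) ?T" by (rule inj_onI) auto
  have "(\<Sum>j\<in>?T. ?q (i - 2*j) * f (j - 1)) = (\<Sum>j\<in>?T. ?q (i - 2 - 2*(j-1)) * f (j - 1))"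
    by (simp add: algebra_simps)
  also have "\<dots> = (\<Sum>j\<in>(\<lambda>j. j - 1) ` ?T. ?q (i - 2 - 2*j) * f j)"
    by (subst sum.reindex[OF inj]) (simp add: comp_def)
  also have "\<dots> = (\<Sum>j\<in>W M (i-2). ?q (i - 2 - 2*j) * f j)"
  proof (rule sum_on_W[OF sq])
    show "finite ((\<lambda>j. j - 1) ` ?T)" using fT by simp
    show "W M (i - 2) \<subseteq> (\<lambda>j. j - 1) ` ?T"
    proof
      fix j assume "j \<in> W M (i-2)"
      then have "j + 1 \<in> ?T" "j = (j+1) - 1" by (auto simp: W_def)
      then show "j \<in> (\<lambda>j. j - 1) ` ?T" by blast
    qed
  qed
  also have "\<dots> = (\<Sum>j\<in>?T. ?q (i - 2 - 2*j) * f j)"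
    by (rule sum_on_W[OF sq fT, symmetric]) (auto simp: W_def)
  finally have e4: "(\<Sum>j\<in>?T. ?q (i - 2*j) * f (j - 1)) = (\<Sum>j\<in>?T. ?q (i - 2 - 2*j) * f j)" .
  have "diff (subd b f) i = (\<Sum>j\<in>?T. (b (i - 2*j) - b (i - 1 - 2*j)) * f j)"
    unfolding diff_def e1 e2 by (simp add: algebra_simps sum_subtractf)
  also have "\<dots> = (\<Sum>j\<in>?T. (?q (i - 2*j) - ?q (i - 2 - 2*j)) * f j)"
  proof (rule sum.cong)
    fix j
    have "b (i - 2*j) = ?q (i - 2*j) + ?q (i - 1 - 2*j)" using dm_rec[OF s, of "i - 2*j"] by (simp add: algebra_simps)
    moreover have "b (i - 1 - 2*j) = ?q (i - 1 - 2*j) + ?q (i - 2 - 2*j)"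
      using dm_rec[OF s, of "i - 1 - 2*j"] by (simp add: algebra_simps)
    ultimately show "(b (i - 2*j) - b (i - 1 - 2*j)) * f j = (?q (i - 2*j) - ?q (i - 2 - 2*j)) * f j"
      by simp
  qed simp
  also have "\<dots> = subd ?q (diff f) i"
    unfolding e3 e4 by (simp add: algebra_simps sum_subtractf)
  finally show "diff (subd b f) i = subd ?q (diff f) i" .
qed



lemma f_dist_nat:
  assumes "bounded_seq f"
  shows "\<bar>f (i + int d) - f i\<bar> \<le> real d * seq_norm (diff f)"
proof (induction d)
  case 0 then show ?case by simp
next
  case (Suc d)
  have "\<bar>diff f (i + int (Suc d))\<bar> \<le> seq_norm (diff f)"
    by (rule seq_norm_upper[OF bounded_diff[OF assms]])
  then have "\<bar>f (i + int (Suc d)) - f (i + int d)\<bar> \<le> seq_norm (diff f)"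
    by (simp add: diff_def algebra_simps)
  then show ?case using Suc by (simp add: algebra_simps)
qed

lemma f_dist:
  assumes "bounded_seq f"
  shows "\<bar>f j - f i\<bar> \<le> real_of_int \<bar>j - i\<bar> * seq_norm (diff f)"
proof (cases "i \<le> j")
  case True
  then show ?thesis using f_dist_nat[OF assms, of i "nat (j - i)"] by simp
next
  case False
  then show ?thesis using f_dist_nat[OF assms, of j "nat (i - j)"] by (simp add: abs_minus_commute)
qed

lemma rc_sum_W:
  assumes s: "supp_in b M" and rc: "rc b"
  shows "(\<Sum>j\<in>W M m. b (m - 2*j)) = 1"
proof -
  obtain r where "m = 2*r \<or> m = 2*r+1" by (metis dvd_def odd_two_times_div_two_succ)
  then show ?thesis
  proof
    assume m: "m = 2*r"
    have inj: "inj_on (\<lambda>j. r - j) (W M m)" by (rule inj_onI) auto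
    have "(\<Sum>j\<in>W M m. b (m - 2*j)) = (\<Sum>j\<in>W M m. b (2*(r - j)))"
      using m by (simp add: algebra_simps)
    also have "\<dots> = (\<Sum>l\<in>(\<lambda>j. r - j) ` W M m. b (2*l))"
      by (subst sum.reindex[OF inj]) (simp add: comp_def)
    also have "\<dots> = (\<Sum>l\<in>{l. b (2*l) \<noteq> 0}. b (2*l))"
    proof (rule sum.mono_neutral_right)
      show "finite ((\<lambda>j. r - j) ` W M m)" using finite_W by simp
      show "{l. b (2*l) \<noteq> 0} \<subseteq> (\<lambda>j. r - j) ` W M m"
      proof
        fix l assume "l \<in> {l. b (2*l) \<noteq> 0}"
        then have "-M \<le> 2*l" "2*l \<le> M" using s unfolding supp_in_def by auto
        then have "r - l \<in> W M m" "l = r - (r - l)" using m by (auto simp: W_def)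
        then show "l \<in> (\<lambda>j. r - j) ` W M m" by blast
      qed
    qed auto
    finally show ?thesis using rc unfolding rc_def by simp
  next
    assume m: "m = 2*r+1"
    have inj: "inj_on (\<lambda>j. r - j) (W M m)" by (rule inj_onI) auto
    have "(\<Sum>j\<in>W M m. b (m - 2*j)) = (\<Sum>j\<in>W M m. b (2*(r - j)+1))"
      using m by (simp add: algebra_simps)
    also have "\<dots> = (\<Sum>l\<in>(\<lambda>j. r - j) ` W M m. b (2*l+1))"
      by (subst sum.reindex[OF inj]) (simp add: comp_def)
    also have "\<dots> = (\<Sum>l\<in>{l. b (2*l+1) \<noteq> 0}. b (2*l+1))"
    proof (rule sum.mono_neutral_right)
      show "finite ((\<lambda>j. r - j) ` W M m)" using finite_W by simp
      show "{l. b (2*l+1) \<noteq> 0} \<subseteq> (\<lambda>j. r - j) ` W M m"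
      proof
        fix l assume "l \<in> {l. b (2*l+1) \<noteq> 0}"
        then have "-M \<le> 2*l+1" "2*l+1 \<le> M" using s unfolding supp_in_def by auto
        then have "r - l \<in> W M m" "l = r - (r - l)" using m by (auto simp: W_def)
        then show "l \<in> (\<lambda>j. r - j) ` W M m" by blast
      qed
    qed auto
    finally show ?thesis using rc unfolding rc_def by simp
  qed
qed

lemma g_near:
  assumes s: "supp_in b M" and rc: "rc b" and f: "bounded_seq f" and mi: "\<bar>m - 2*i\<bar> \<le> 2" and M: "M > 0"
  shows "\<bar>subd b f m - f i\<bar> \<le> nb M b * (real_of_int (M+2) * seq_norm (diff f))"
proof -
  let ?D = "real_of_int (M+2) * seq_norm (diff f)"
  have "subd b f m - f i = (\<Sum>j\<in>W M m. b (m - 2*j) * f j) - (\<Sum>j\<in>W M m. b (m - 2*j)) * f i"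
    using rc_sum_W[OF s rc, of m] subd_W[OF s] by simp
  also have "\<dots> = (\<Sum>j\<in>W M m. b (m - 2*j) * (f j - f i))"
    by (simp add: sum_distrib_right sum_distrib_left algebra_simps sum_subtractf)
  finally have eq: "subd b f m - f i = (\<Sum>j\<in>W M m. b (m - 2*j) * (f j - f i))" .
  have "\<bar>subd b f m - f i\<bar> \<le> (\<Sum>j\<in>W M m. \<bar>b (m - 2*j) * (f j - f i)\<bar>)"
    unfolding eq by (rule sum_abs)
  also have "\<dots> \<le> (\<Sum>j\<in>W M m. \<bar>b (m - 2*j)\<bar> * ?D)"
  proof (rule sum_mono)
    fix j assume j: "j \<in> W M m"
    then have "\<bar>j - i\<bar> \<le> M + 2" using mi by (auto simp: W_def)
    then have "real_of_int \<bar>j - i\<bar> * seq_norm (diff f) \<le> ?D"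
      by (intro mult_right_mono seq_norm_nonneg[OF bounded_diff[OF f]]) linarith
    then have "\<bar>f j - f i\<bar> \<le> ?D" using f_dist[OF f, of j i] by linarith
    then show "\<bar>b (m - 2*j) * (f j - f i)\<bar> \<le> \<bar>b (m - 2*j)\<bar> * ?D"
      by (simp add: abs_mult mult_left_mono)
  qed
  also have "\<dots> = (\<Sum>j\<in>W M m. \<bar>b (m - 2*j)\<bar>) * ?D" by (simp add: sum_distrib_right)
  also have "\<dots> \<le> nb M b * ?D"
  proof (rule mult_right_mono[OF sum_abs_W[OF s]])
    show "0 \<le> ?D" using seq_norm_nonneg[OF bounded_diff[OF f]] M by simp
  qed
  finally show ?thesis .
qed



lemma PL_step:
  assumes s: "supp_in b M" and rc: "rc b" and f: "bounded_seq f" and M: "M > 0"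
  shows "\<bar>PL (subd b f) (Suc k) x - PL f k x\<bar>
          \<le> nb M b * (real_of_int (M+2) * seq_norm (diff f)) + seq_norm (diff f)"
proof -
  let ?g = "subd b f"
  let ?A = "nb M b * (real_of_int (M+2) * seq_norm (diff f))"
  let ?D = "seq_norm (diff f)"
  define t where "t = x * 2 ^ k"
  define i where "i = \<lfloor>t\<rfloor>"
  define u where "u = t - of_int i"
  define m where "m = \<lfloor>2*t\<rfloor>"
  define v where "v = 2*t - of_int m"
  have u: "0 \<le> u" "u < 1" unfolding u_def i_def by linarith+
  have v: "0 \<le> v" "v < 1" unfolding v_def m_def by linarith+
  have m1: "2*i \<le> m"
  proof -
    have "of_int i \<le> t" unfolding i_def by (rule of_int_floor_le)
    then have "of_int (2*i) \<le> 2*t" by simp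
    then show ?thesis unfolding m_def by (simp only: le_floor_iff)
  qed
  have m2: "m \<le> 2*i+1" unfolding m_def i_def by linarith
  have PL1: "PL f k x = (1 - u) * f i + u * f (i+1)"
    unfolding PL_def Let_def u_def i_def t_def ..
  have t2: "x * 2 ^ Suc k = 2 * t" unfolding t_def by simp
  have PL2: "PL ?g (Suc k) x = (1 - v) * ?g m + v * ?g (m+1)"
    unfolding PL_def Let_def t2 v_def m_def ..
  have G1: "\<bar>?g m - f i\<bar> \<le> ?A" by (rule g_near[OF s rc f _ M]) (use m1 m2 in auto)
  have G2: "\<bar>?g (m+1) - f i\<bar> \<le> ?A" by (rule g_near[OF s rc f _ M]) (use m1 m2 in auto)
  have F: "\<bar>f (i+1) - f i\<bar> \<le> ?D" using f_dist[OF f, of "i+1" i] by simp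
  have "PL ?g (Suc k) x - PL f k x = (1-v) * (?g m - f i) + v * (?g (m+1) - f i) - u * (f (i+1) - f i)"
    unfolding PL1 PL2 by (simp add: algebra_simps)
  also have "\<bar>\<dots>\<bar> \<le> (1-v) * \<bar>?g m - f i\<bar> + v * \<bar>?g (m+1) - f i\<bar> + u * \<bar>f (i+1) - f i\<bar>"
  proof -
    have "\<bar>(1-v) * (?g m - f i) + v * (?g (m+1) - f i) - u * (f (i+1) - f i)\<bar>
       \<le> \<bar>(1-v) * (?g m - f i)\<bar> + \<bar>v * (?g (m+1) - f i)\<bar> + \<bar>u * (f (i+1) - f i)\<bar>"
      by linarith
    also have "\<dots> = (1-v) * \<bar>?g m - f i\<bar> + v * \<bar>?g (m+1) - f i\<bar> + u * \<bar>f (i+1) - f i\<bar>"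
      using u v by (simp add: abs_mult)
    finally show ?thesis .
  qed
  also have "\<dots> \<le> (1-v) * ?A + v * ?A + 1 * ?D"
  proof -
    have "(1-v) * \<bar>?g m - f i\<bar> \<le> (1-v) * ?A" using G1 v by (intro mult_left_mono) auto
    moreover have "v * \<bar>?g (m+1) - f i\<bar> \<le> v * ?A" using G2 v by (intro mult_left_mono) auto
    moreover have "u * \<bar>f (i+1) - f i\<bar> \<le> 1 * ?D"
      using F u by (intro mult_mono) (auto simp: seq_norm_nonneg[OF bounded_diff[OF f]])
    ultimately show ?thesis by linarith
  qed
  also have "\<dots> = ?A + ?D" by (simp add: algebra_simps)
  finally show ?thesis .
qed



fun ops :: "(nat \<Rightarrow> mask) \<Rightarrow> nat \<Rightarrow> nat \<Rightarrow> sequence \<Rightarrow> sequence" where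
  "ops q k 0 g = g"
| "ops q k (Suc m) g = subd (q (k+m)) (ops q k m g)"

lemma ops_bounded: "(\<And>k. supp_in (q k) M) \<Longrightarrow> bounded_seq g \<Longrightarrow> bounded_seq (ops q k m g)"
  by (induction m) (auto intro: subd_bounded)

lemma pow_bounded: "supp_in qs M \<Longrightarrow> bounded_seq g \<Longrightarrow> bounded_seq ((subd qs ^^ m) g)"
  by (induction m) (auto intro: subd_bounded)

lemma pow_norm:
  assumes s: "supp_in qs M" and B: "nb M qs \<le> B" and g: "bounded_seq g"
  shows "seq_norm ((subd qs ^^ m) g) \<le> B ^ m * seq_norm g"
proof (induction m)
  case 0 then show ?case by simp
next
  case (Suc m)
  have B0: "0 \<le> B" using nb_nonneg[of M qs] B by linarith
  have "seq_norm ((subd qs ^^ Suc m) g) \<le> nb M qs * seq_norm ((subd qs ^^ m) g)"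
    using subd_norm[OF s pow_bounded[OF s g]] by simp
  also have "\<dots> \<le> B * (B ^ m * seq_norm g)"
    using Suc B B0 by (intro mult_mono) (auto simp: nb_nonneg seq_norm_nonneg pow_bounded[OF s g])
  finally show ?case by simp
qed

lemma perturb:
  assumes sq: "\<And>k. supp_in (q k) M" and sqs: "supp_in qs M"
    and bq: "\<And>k. nb M (q k) \<le> B" and bqs: "nb M qs \<le> B"
    and conv: "(\<lambda>k. nb M (\<lambda>i. q k i - qs i)) \<longlonglongrightarrow> 0"
  shows "\<forall>\<epsilon>>0. eventually (\<lambda>k. \<forall>g. bounded_seq g \<longrightarrow>
           seq_norm (\<lambda>i. ops q k m g i - (subd qs ^^ m) g i) \<le> \<epsilon> * seq_norm g) sequentially"
proof (induction m)
  case 0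
  show ?case
  proof (intro allI impI always_eventually)
    fix \<epsilon> :: real and k g assume "\<epsilon> > 0" and g: "bounded_seq g"
    have "seq_norm (\<lambda>i. ops q k 0 g i - (subd qs ^^ 0) g i) \<le> 0"
      by (rule seq_norm_least) simp
    also have "0 \<le> \<epsilon> * seq_norm g" using \<open>\<epsilon> > 0\<close> seq_norm_nonneg[OF g] by simp
    finally show "seq_norm (\<lambda>i. ops q k 0 g i - (subd qs ^^ 0) g i) \<le> \<epsilon> * seq_norm g" .
  qed
next
  case (Suc m)
  show ?case
  proof (intro allI impI)
    fix \<epsilon> :: real assume e: "\<epsilon> > 0"
    have B0: "0 \<le> B" using nb_nonneg[of M qs] bqs by linarith
    define e1 where "e1 = \<epsilon> / (2 * (B + 1))"
    define \<delta> where "\<delta> = \<epsilon> / (2 * (B ^ m + 1))"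
    have e1: "e1 > 0" unfolding e1_def using e B0 by simp
    have Bm: "0 \<le> B ^ m" using B0 by simp
    have d: "\<delta> > 0" unfolding \<delta>_def using e Bm by (simp add: field_simps)
    have Be1: "B * e1 \<le> \<epsilon> / 2" unfolding e1_def using e B0 by (simp add: field_simps)
    have Bd: "\<delta> * B ^ m \<le> \<epsilon> / 2" unfolding \<delta>_def using e Bm by (simp add: field_simps)
    have ev1: "eventually (\<lambda>k. \<forall>g. bounded_seq g \<longrightarrow>
           seq_norm (\<lambda>i. ops q k m g i - (subd qs ^^ m) g i) \<le> e1 * seq_norm g) sequentially"
      using Suc e1 by blast
    have "eventually (\<lambda>k. nb M (\<lambda>i. q k i - qs i) < \<delta>) sequentially"
      using order_tendstoD(2)[OF conv d] .
    then have ev2: "eventually (\<lambda>k. nb M (\<lambda>i. q (k+m) i - qs i) < \<delta>) sequentially"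
      using eventually_sequentially_seg[of "\<lambda>k. nb M (\<lambda>i. q k i - qs i) < \<delta>" m] by blast
    show "eventually (\<lambda>k. \<forall>g. bounded_seq g \<longrightarrow>
           seq_norm (\<lambda>i. ops q k (Suc m) g i - (subd qs ^^ Suc m) g i) \<le> \<epsilon> * seq_norm g) sequentially"
      using ev1 ev2
    proof eventually_elim
      case (elim k)
      show ?case
      proof (intro allI impI)
        fix g assume g: "bounded_seq g"
        let ?P = "ops q k m g" and ?X = "(subd qs ^^ m) g" and ?b = "q (k+m)"
        have P: "bounded_seq ?P" by (rule ops_bounded[OF sq g])
        have X: "bounded_seq ?X" by (rule pow_bounded[OF sqs g])
        have PX: "bounded_seq (\<lambda>i. ?P i - ?X i)" by (rule bounded_diff_seq[OF P X])
        have sd: "supp_in (\<lambda>i. ?b i - qs i) M" by (rule supp_in_minus[OF sq sqs])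
        have n1: "seq_norm (\<lambda>i. ?P i - ?X i) \<le> e1 * seq_norm g" using elim(1) g by blast
        have n2: "seq_norm ?X \<le> B ^ m * seq_norm g" by (rule pow_norm[OF sqs bqs g])
        have g0: "0 \<le> seq_norm g" by (rule seq_norm_nonneg[OF g])
        show "seq_norm (\<lambda>i. ops q k (Suc m) g i - (subd qs ^^ Suc m) g i) \<le> \<epsilon> * seq_norm g"
        proof (rule seq_norm_least)
          fix i
          have "ops q k (Suc m) g i - (subd qs ^^ Suc m) g i = subd ?b ?P i - subd qs ?X i" by simp
          also have "\<dots> = subd ?b (\<lambda>i. ?P i - ?X i) i + subd (\<lambda>i. ?b i - qs i) ?X i"
            using subd_minus[OF sq[of "k+m"], where f="?P" and g="?X"] subd_mask_minus[OF sq[of "k+m"] sqs, where f="?X"] by simp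
          finally have eq: "ops q k (Suc m) g i - (subd qs ^^ Suc m) g i =
             subd ?b (\<lambda>i. ?P i - ?X i) i + subd (\<lambda>i. ?b i - qs i) ?X i" .
          have t1: "\<bar>subd ?b (\<lambda>i. ?P i - ?X i) i\<bar> \<le> B * (e1 * seq_norm g)"
          proof -
            have "\<bar>subd ?b (\<lambda>i. ?P i - ?X i) i\<bar> \<le> nb M ?b * seq_norm (\<lambda>i. ?P i - ?X i)"
              by (rule subd_bound[OF sq PX])
            also have "\<dots> \<le> B * (e1 * seq_norm g)"
              by (intro mult_mono bq n1 seq_norm_nonneg[OF PX] B0)
            finally show ?thesis .
          qed
          have t2: "\<bar>subd (\<lambda>i. ?b i - qs i) ?X i\<bar> \<le> \<delta> * (B ^ m * seq_norm g)"
          proof -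
            have "\<bar>subd (\<lambda>i. ?b i - qs i) ?X i\<bar> \<le> nb M (\<lambda>i. ?b i - qs i) * seq_norm ?X"
              by (rule subd_bound[OF sd X])
            also have "\<dots> \<le> \<delta> * (B ^ m * seq_norm g)"
              using elim(2) d by (intro mult_mono n2 seq_norm_nonneg[OF X]) auto
            finally show ?thesis .
          qed
          have "B * (e1 * seq_norm g) \<le> \<epsilon> / 2 * seq_norm g"
            using mult_right_mono[OF Be1 g0] by (simp add: algebra_simps)
          moreover have "\<delta> * (B ^ m * seq_norm g) \<le> \<epsilon> / 2 * seq_norm g"
            using mult_right_mono[OF Bd g0] by (simp add: algebra_simps)
          ultimately show "\<bar>ops q k (Suc m) g i - (subd qs ^^ Suc m) g i\<bar> \<le> \<epsilon> * seq_norm g"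
            unfolding eq using t1 t2 by linarith
        qed
      qed
    qed
  qed
qed



lemma pow_scale: "supp_in qs M \<Longrightarrow> (subd qs ^^ m) (\<lambda>i. c * g i) = (\<lambda>i. c * (subd qs ^^ m) g i)"
  by (induction m) (auto simp: subd_scale)

lemma opn_facts:
  assumes s: "supp_in qs M" and B: "nb M qs \<le> B"
  shows "0 \<le> op_norm_pow qs n"
    and "\<And>g. bounded_seq g \<Longrightarrow> seq_norm ((subd qs ^^ n) g) \<le> op_norm_pow qs n * seq_norm g"
proof -
  let ?F = "{f. bounded_seq f \<and> seq_norm f \<le> 1}"
  let ?h = "\<lambda>f. seq_norm ((subd qs ^^ n) f)"
  have B0: "0 \<le> B" using nb_nonneg[of M qs] B by linarith
  have bdd: "bdd_above (?h ` ?F)"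
  proof (rule bdd_aboveI2)
    fix f assume "f \<in> ?F"
    then have f: "bounded_seq f" "seq_norm f \<le> 1" by auto
    have "?h f \<le> B ^ n * seq_norm f" by (rule pow_norm[OF s B f(1)])
    also have "\<dots> \<le> B ^ n * 1" using f B0 by (intro mult_left_mono) auto
    finally show "?h f \<le> B ^ n" by simp
  qed
  have upper: "\<And>f. f \<in> ?F \<Longrightarrow> ?h f \<le> op_norm_pow qs n"
    unfolding op_norm_pow_def by (rule cSUP_upper[OF _ bdd])
  have z: "(\<lambda>i. 0::real) \<in> ?F"
    by (auto intro: bounded_seqI[of _ 0] seq_norm_least)
  show "0 \<le> op_norm_pow qs n"
    using upper[OF z] seq_norm_nonneg[OF pow_bounded[OF s, of "\<lambda>i. 0" n]] bounded_seqI[of "\<lambda>i. 0::real" 0]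
    by fastforce
  fix g assume g: "bounded_seq g"
  show "seq_norm ((subd qs ^^ n) g) \<le> op_norm_pow qs n * seq_norm g"
  proof (cases "seq_norm g = 0")
    case True
    then show ?thesis using pow_norm[OF s B g, of n] by simp
  next
    case False
    then have gp: "seq_norm g > 0" using seq_norm_nonneg[OF g] by simp
    define h where "h = (\<lambda>i. (1 / seq_norm g) * g i)"
    have hb: "\<And>i. \<bar>h i\<bar> \<le> 1"
    proof -
      fix i show "\<bar>h i\<bar> \<le> 1" unfolding h_def using seq_norm_upper[OF g, of i] gp
        by (simp add: abs_mult field_simps)
    qed
    have hF: "h \<in> ?F" using hb by (auto intro: bounded_seqI seq_norm_least)
    have hp: "(subd qs ^^ n) h = (\<lambda>i. (1 / seq_norm g) * (subd qs ^^ n) g i)"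
      unfolding h_def by (rule pow_scale[OF s])
    show ?thesis
    proof (rule seq_norm_least)
      fix i
      have "\<bar>(subd qs ^^ n) h i\<bar> \<le> seq_norm ((subd qs ^^ n) h)"
        by (rule seq_norm_upper[OF pow_bounded[OF s]]) (use hF in auto)
      also have "\<dots> \<le> op_norm_pow qs n" by (rule upper[OF hF])
      finally have "\<bar>(subd qs ^^ n) g i\<bar> / seq_norm g \<le> op_norm_pow qs n"
        unfolding hp using gp by (simp add: abs_mult)
      then show "\<bar>(subd qs ^^ n) g i\<bar> \<le> op_norm_pow qs n * seq_norm g"
        using gp by (simp add: field_simps)
    qed
  qed
qed



lemma growth:
  fixes x :: "nat \<Rightarrow> real"
  assumes x0: "\<And>k. 0 \<le> x k" and st: "\<And>k. x (Suc k) \<le> B1 * x k" and B1: "1 \<le> B1"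
    and eta: "0 < \<eta>" "\<eta> < 1" and n: "0 < n" and con: "\<And>k. K0 \<le> k \<Longrightarrow> x (k + n) \<le> \<eta> ^ n * x k"
  shows "x k \<le> (B1 / \<eta>) ^ (K0 + n) * \<eta> ^ k * x 0"
proof (induction k rule: less_induct)
  case (less k)
  let ?C = "(B1 / \<eta>) ^ (K0 + n)"
  show ?case
  proof (cases "k < K0 + n")
    case True
    have pw: "x j \<le> B1 ^ j * x 0" for j
    proof (induction j)
      case 0 then show ?case by simp
    next
      case (Suc j)
      have "x (Suc j) \<le> B1 * x j" by (rule st)
      also have "\<dots> \<le> B1 * (B1 ^ j * x 0)" using Suc B1 by (intro mult_left_mono) auto
      finally show ?case by simp
    qed
    have r1: "1 \<le> B1 / \<eta>" using B1 eta by (simp add: field_simps)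
    have "B1 ^ k = (B1 / \<eta>) ^ k * \<eta> ^ k" using eta by (simp add: power_divide)
    also have "\<dots> \<le> ?C * \<eta> ^ k"
      using True r1 eta by (intro mult_right_mono power_increasing) auto
    finally have "B1 ^ k * x 0 \<le> ?C * \<eta> ^ k * x 0" using x0[of 0] by (intro mult_right_mono)
    then show ?thesis using pw[of k] by linarith
  next
    case False
    define j where "j = k - n"
    have k: "k = j + n" and j: "K0 \<le> j" "j < k" using False n unfolding j_def by auto
    have "x k \<le> \<eta> ^ n * x j" unfolding k by (rule con[OF j(1)])
    also have "\<dots> \<le> \<eta> ^ n * (?C * \<eta> ^ j * x 0)"
      using less[OF j(2)] eta by (intro mult_left_mono) auto
    also have "\<dots> = ?C * \<eta> ^ k * x 0" unfolding k by (simp add: power_add algebra_simps)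
    finally show ?thesis .
  qed
qed

lemma unif:
  fixes s :: "nat \<Rightarrow> real \<Rightarrow> real"
  assumes st: "\<And>k x. \<bar>s (Suc k) x - s k x\<bar> \<le> D0 * \<eta> ^ k"
    and eta: "0 < \<eta>" "\<eta> < 1" and D0: "0 \<le> D0"
  shows "\<exists>l. uniform_limit UNIV s l sequentially \<and> (\<forall>k x. \<bar>l x - s k x\<bar> \<le> D0 * \<eta> ^ k / (1 - \<eta>))"
proof -
  have tele: "\<bar>s (k + h) x - s k x\<bar> \<le> D0 * (\<eta> ^ k - \<eta> ^ (k + h)) / (1 - \<eta>)" for k h x
  proof (induction h)
    case 0 then show ?case by simp
  next
    case (Suc h)
    have "\<bar>s (k + Suc h) x - s k x\<bar> \<le> \<bar>s (Suc (k + h)) x - s (k + h) x\<bar> + \<bar>s (k + h) x - s k x\<bar>"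
      by simp
    also have "\<dots> \<le> D0 * \<eta> ^ (k + h) + D0 * (\<eta> ^ k - \<eta> ^ (k + h)) / (1 - \<eta>)"
      using st Suc by (intro add_mono) auto
    also have "\<dots> = D0 * (\<eta> ^ k - \<eta> ^ (k + Suc h)) / (1 - \<eta>)"
      using eta by (simp add: field_simps)
    finally show ?case .
  qed
  have tele2: "\<bar>s m x - s k x\<bar> \<le> D0 * \<eta> ^ k / (1 - \<eta>)" if "k \<le> m" for k m x
  proof -
    obtain h where m: "m = k + h" using \<open>k \<le> m\<close> le_Suc_ex by blast
    have "\<bar>s m x - s k x\<bar> \<le> D0 * (\<eta> ^ k - \<eta> ^ (k + h)) / (1 - \<eta>)" unfolding m by (rule tele)
    also have "\<dots> \<le> D0 * \<eta> ^ k / (1 - \<eta>)"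
      using eta D0 by (intro divide_right_mono mult_left_mono) auto
    finally show ?thesis .
  qed
  have lim0: "(\<lambda>k. D0 / (1 - \<eta>) * \<eta> ^ k) \<longlonglongrightarrow> 0"
    using eta by (intro tendsto_mult_right_zero LIMSEQ_power_zero) simp
  have cauchy: "\<forall>e>0. \<exists>N. \<forall>m n x. N \<le> m \<and> N \<le> n \<and> True \<longrightarrow> dist (s m x) (s n x) < e"
  proof (intro allI impI)
    fix e :: real assume e: "e > 0"
    have "eventually (\<lambda>k. D0 / (1 - \<eta>) * \<eta> ^ k < e / 2) sequentially"
      using order_tendstoD(2)[OF lim0, of "e/2"] e by (simp only: half_gt_zero)
    then obtain N where N: "D0 / (1 - \<eta>) * \<eta> ^ N < e / 2" unfolding eventually_sequentially by auto
    show "\<exists>N. \<forall>m n x. N \<le> m \<and> N \<le> n \<and> True \<longrightarrow> dist (s m x) (s n x) < e"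
    proof (intro exI allI impI)
      fix m n x assume mn: "N \<le> m \<and> N \<le> n \<and> True"
      have "\<bar>s m x - s N x\<bar> \<le> D0 * \<eta> ^ N / (1 - \<eta>)" using mn by (intro tele2) auto
      moreover have "\<bar>s n x - s N x\<bar> \<le> D0 * \<eta> ^ N / (1 - \<eta>)" using mn by (intro tele2) auto
      moreover have "D0 * \<eta> ^ N / (1 - \<eta>) = D0 / (1 - \<eta>) * \<eta> ^ N" by simp
      ultimately show "dist (s m x) (s n x) < e" using N unfolding dist_real_def by arith
    qed
  qed
  then obtain l where l: "\<forall>e>0. \<exists>N. \<forall>n x. N \<le> n \<and> True \<longrightarrow> dist (s n x) (l x) < e"
    using uniformly_convergent_eq_cauchy[of "\<lambda>_. True" s] by blast
  have ul: "uniform_limit UNIV s l sequentially"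
    unfolding uniform_limit_sequentially_iff using l by blast
  have "\<bar>l x - s k x\<bar> \<le> D0 * \<eta> ^ k / (1 - \<eta>)" for k x
  proof (rule LIMSEQ_le_const2)
    show "(\<lambda>m. \<bar>s m x - s k x\<bar>) \<longlonglongrightarrow> \<bar>l x - s k x\<bar>"
      by (intro tendsto_intros tendsto_uniform_limitI[OF ul]) simp
    show "\<exists>N. \<forall>m\<ge>N. \<bar>s m x - s k x\<bar> \<le> D0 * \<eta> ^ k / (1 - \<eta>)"
      using tele2 by blast
  qed
  then show ?thesis using ul by blast
qed

lemma limit_fun_eq:
  assumes "uniform_limit UNIV (\<lambda>k x. PL (iter_seq a f k) k x) g sequentially"
  shows "limit_fun a f = g"
  unfolding limit_fun_def
proof (rule the_equality)
  show "uniform_limit UNIV (\<lambda>k x. PL (iter_seq a f k) k x) g sequentially" by (rule assms)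
next
  fix h assume h: "uniform_limit UNIV (\<lambda>k x. PL (iter_seq a f k) k x) h sequentially"
  show "h = g"
  proof
    fix x
    show "h x = g x"
      by (rule LIMSEQ_unique[OF tendsto_uniform_limitI[OF h] tendsto_uniform_limitI[OF assms]]) simp_all
  qed
qed



theorem theorem11:
  fixes astar :: mask and a :: "nat \<Rightarrow> mask" and n :: nat
  assumes "fin_supp astar"
    and "convergent_scheme (\<lambda>k. astar)"
    and "n > 0"
    and "op_norm_pow (diff_mask astar) n < 1"
    and "local_scheme a"
    and "reproduces_constants a"
    and "(\<lambda>k. seq_norm (\<lambda>i. a k i - astar i)) \<longlonglongrightarrow> 0"
  shows "convergent_scheme a \<and>
    (\<forall>\<eta>. root n (op_norm_pow (diff_mask astar) n) < \<eta> \<and> \<eta> < 1 \<longrightarrow>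
      (\<exists>C>0. \<forall>f. bounded_seq f \<longrightarrow> (\<forall>k. \<forall>x.
         \<bar>limit_fun a f x - PL (iter_seq a f (Suc k)) (Suc k) x\<bar>
           \<le> C * \<eta> ^ k * seq_norm (diff f))))"
proof -
  let ?qs = "diff_mask astar" and ?mu = "op_norm_pow (diff_mask astar) n"
  obtain N :: int where N: "N > 0" "\<And>k i. a k i \<noteq> 0 \<Longrightarrow> i \<in> {-N..N}"
    using assms(5) unfolding local_scheme_def by blast
  have sa: "\<And>k. supp_in (a k) N" unfolding supp_in_def using N(2) by fastforce
  have rca: "\<And>k. rc (a k)" using assms(6) unfolding reproduces_constants_def rc_def by blast
  have bdiff: "bounded_seq (\<lambda>i. a k i - astar i)" for k
  proof -
    let ?S = "{-N..N} \<union> {i. astar i \<noteq> 0}"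
    have fin: "finite ?S" using assms(1) unfolding fin_supp_def by simp
    have "range (\<lambda>i. \<bar>a k i - astar i\<bar>) \<subseteq> insert 0 ((\<lambda>i. \<bar>a k i - astar i\<bar>) ` ?S)"
    proof
      fix y assume "y \<in> range (\<lambda>i. \<bar>a k i - astar i\<bar>)"
      then obtain i where y: "y = \<bar>a k i - astar i\<bar>" by blast
      show "y \<in> insert 0 ((\<lambda>i. \<bar>a k i - astar i\<bar>) ` ?S)"
      proof (cases "i \<in> ?S")
        case True then show ?thesis using y by blast
      next
        case False
        then have "a k i = 0" "astar i = 0" using N(2)[of k i] by auto
        then show ?thesis using y by simp
      qed
    qed
    moreover have "bdd_above (insert 0 ((\<lambda>i. \<bar>a k i - astar i\<bar>) ` ?S))"
      using fin by (intro bdd_above_finite) simp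
    ultimately show ?thesis unfolding bounded_seq_def by (rule bdd_above_mono[rotated])
  qed
  have pa: "(\<lambda>k. a k i) \<longlonglongrightarrow> astar i" for i
  proof -
    have "(\<lambda>k. a k i - astar i) \<longlonglongrightarrow> 0"
      by (rule Lim_null_comparison[OF _ assms(7)]) (auto intro: seq_norm_upper[OF bdiff] always_eventually)
    then have "(\<lambda>k. (a k i - astar i) + astar i) \<longlonglongrightarrow> 0 + astar i" by (intro tendsto_add tendsto_const)
    then show ?thesis by simp
  qed
  have sas: "supp_in astar N"
    unfolding supp_in_def
  proof (intro allI impI)
    fix i assume nz: "astar i \<noteq> 0"
    show "-N \<le> i \<and> i \<le> N"
    proof (rule ccontr)
      assume "\<not> (-N \<le> i \<and> i \<le> N)"
      then have "\<And>k. a k i = 0" using sa unfolding supp_in_def by blast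
      then have "(\<lambda>k. a k i) \<longlonglongrightarrow> 0" by simp
      then show False using LIMSEQ_unique[OF pa[of i]] nz by blast
    qed
  qed
  define q where "q = (\<lambda>k. diff_mask (a k))"
  have sq: "\<And>k. supp_in (q k) N" unfolding q_def by (rule dm_supp[OF sa N(1) rca])
  have pq: "(\<lambda>k. q k i) \<longlonglongrightarrow> ?qs i" for i
    unfolding q_def dm_formula[OF sa] dm_formula[OF sas]
    by (intro tendsto_intros pa)
  have sqs: "supp_in ?qs N"
    unfolding supp_in_def
  proof (intro allI impI)
    fix i assume nz: "?qs i \<noteq> 0"
    show "-N \<le> i \<and> i \<le> N"
    proof (rule ccontr)
      assume "\<not> (-N \<le> i \<and> i \<le> N)"
      then have "\<And>k. q k i = 0" using sq unfolding supp_in_def by blast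
      then have "(\<lambda>k. q k i) \<longlonglongrightarrow> 0" by simp
      then show False using LIMSEQ_unique[OF pq[of i]] nz by blast
    qed
  qed
  have nbq: "(\<lambda>k. nb N (\<lambda>i. q k i - ?qs i)) \<longlonglongrightarrow> 0"
  proof -
    have "(\<lambda>k. nb N (\<lambda>i. q k i - ?qs i)) \<longlonglongrightarrow> (\<Sum>m\<in>{-N..N}. \<bar>?qs m - ?qs m\<bar>)"
      unfolding nb_def by (intro tendsto_intros pq)
    then show ?thesis by simp
  qed
  have "(\<lambda>k. nb N (q k)) \<longlonglongrightarrow> nb N ?qs" unfolding nb_def by (intro tendsto_intros pq)
  then have "Bseq (\<lambda>k. nb N (q k))" using convergent_imp_Bseq convergentI by blast
  then obtain Bq0 where "\<forall>k. norm (nb N (q k)) \<le> Bq0" by (metis BseqE)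
  then obtain Bq where Bq: "\<And>k. nb N (q k) \<le> Bq" by (metis abs_le_D1 real_norm_def)
  define B where "B = max (max Bq (nb N ?qs)) 1"
  have bq: "\<And>k. nb N (q k) \<le> B" using Bq unfolding B_def by (meson max.coboundedI1 order_trans)
  have bqs: "nb N ?qs \<le> B" unfolding B_def by simp
  have B1: "1 \<le> B" unfolding B_def by simp
  have "(\<lambda>k. nb N (a k)) \<longlonglongrightarrow> nb N astar" unfolding nb_def by (intro tendsto_intros pa)
  then have "Bseq (\<lambda>k. nb N (a k))" using convergent_imp_Bseq convergentI by blast
  then obtain Aq0 where "\<forall>k. norm (nb N (a k)) \<le> Aq0" by (metis BseqE)
  then obtain Aq where Aq: "\<And>k. nb N (a k) \<le> Aq" by (metis abs_le_D1 real_norm_def)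
  define A where "A = max Aq 0"
  have ba: "\<And>k. nb N (a k) \<le> A" using Aq unfolding A_def by (meson max.coboundedI1 order_trans)
  have A0: "0 \<le> A" unfolding A_def by simp
  have mu0: "0 \<le> ?mu" by (rule opn_facts(1)[OF sqs bqs])
  have opn: "\<And>g. bounded_seq g \<Longrightarrow> seq_norm ((subd ?qs ^^ n) g) \<le> ?mu * seq_norm g"
    by (rule opn_facts(2)[OF sqs bqs])
  have pert: "\<forall>\<epsilon>>0. eventually (\<lambda>k. \<forall>g. bounded_seq g \<longrightarrow>
           seq_norm (\<lambda>i. ops q k n g i - (subd ?qs ^^ n) g i) \<le> \<epsilon> * seq_norm g) sequentially"
    by (rule perturb[OF sq sqs bq bqs nbq])
  have fb: "bounded_seq (iter_seq a f k)" if "bounded_seq f" for f k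
    using that by (induction k) (auto intro: subd_bounded[OF sa])
  have dstep: "diff (iter_seq a f (Suc k)) = subd (q k) (diff (iter_seq a f k))" for f k
    unfolding q_def by (simp add: diff_subd[OF sa N(1) rca])
  have dops: "diff (iter_seq a f (k + m)) = ops q k m (diff (iter_seq a f k))" for f k m
    by (induction m) (simp_all add: dstep[simplified])
  have key: "\<exists>D>0. \<forall>f. bounded_seq f \<longrightarrow> (\<exists>l. uniform_limit UNIV (\<lambda>k x. PL (iter_seq a f k) k x) l sequentially
       \<and> (\<forall>k x. \<bar>l x - PL (iter_seq a f k) k x\<bar> \<le> D * \<eta> ^ k * seq_norm (diff f)))"
    if eta: "root n ?mu < \<eta>" "\<eta> < 1" for \<eta>
  proof -
    have eta0: "0 < \<eta>" using eta real_root_ge_zero[OF mu0, of n] by linarith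
    have "root n ?mu < root n (\<eta> ^ n)" using eta real_root_power_cancel[OF assms(3), of \<eta>] eta0 by simp
    then have mueta: "?mu < \<eta> ^ n" using assms(3) by simp
    obtain K0 where K0: "\<And>k g. K0 \<le> k \<Longrightarrow> bounded_seq g \<Longrightarrow>
        seq_norm (\<lambda>i. ops q k n g i - (subd ?qs ^^ n) g i) \<le> (\<eta> ^ n - ?mu) * seq_norm g"
      using pert mueta unfolding eventually_sequentially by (metis diff_gt_0_iff_gt)
    have contr: "seq_norm (ops q k n g) \<le> \<eta> ^ n * seq_norm g" if k: "K0 \<le> k" and g: "bounded_seq g" for k g
    proof (rule seq_norm_least)
      fix i
      have o: "bounded_seq (ops q k n g)" by (rule ops_bounded[OF sq g])
      have p: "bounded_seq ((subd ?qs ^^ n) g)" by (rule pow_bounded[OF sqs g])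
      have "\<bar>ops q k n g i - (subd ?qs ^^ n) g i\<bar> \<le> (\<eta> ^ n - ?mu) * seq_norm g"
        using seq_norm_upper[OF bounded_diff_seq[OF o p], of i] K0[OF k g] by simp
      moreover have "\<bar>(subd ?qs ^^ n) g i\<bar> \<le> ?mu * seq_norm g"
        using seq_norm_upper[OF p, of i] opn[OF g] by linarith
      ultimately show "\<bar>ops q k n g i\<bar> \<le> \<eta> ^ n * seq_norm g" by (simp add: algebra_simps)
    qed
    define C1 where "C1 = (B / \<eta>) ^ (K0 + n)"
    define c where "c = A * real_of_int (N + 2) + 1"
    have C1: "0 < C1" unfolding C1_def using B1 eta0 by simp
    have c: "1 \<le> c" unfolding c_def using A0 N(1) by simp
    define D where "D = c * C1 / (1 - \<eta>)"
    have D: "0 < D" unfolding D_def using c C1 eta by simp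
    have "\<forall>f. bounded_seq f \<longrightarrow> (\<exists>l. uniform_limit UNIV (\<lambda>k x. PL (iter_seq a f k) k x) l sequentially
       \<and> (\<forall>k x. \<bar>l x - PL (iter_seq a f k) k x\<bar> \<le> D * \<eta> ^ k * seq_norm (diff f)))"
    proof (intro allI impI)
      fix f assume f: "bounded_seq f"
      let ?x = "\<lambda>k. seq_norm (diff (iter_seq a f k))"
      have xb: "\<And>k. bounded_seq (diff (iter_seq a f k))" by (rule bounded_diff[OF fb[OF f]])
      have gr: "?x k \<le> C1 * \<eta> ^ k * ?x 0" for k
        unfolding C1_def
      proof (rule growth[OF _ _ B1 eta0 eta(2) assms(3)])
        show "\<And>k. 0 \<le> ?x k" by (rule seq_norm_nonneg[OF xb])
        show "?x (Suc k) \<le> B * ?x k" for k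
        proof -
          have "?x (Suc k) \<le> nb N (q k) * ?x k" unfolding dstep by (rule subd_norm[OF sq xb])
          also have "\<dots> \<le> B * ?x k" by (rule mult_right_mono[OF bq seq_norm_nonneg[OF xb]])
          finally show ?thesis .
        qed
        show "?x (k + n) \<le> \<eta> ^ n * ?x k" if "K0 \<le> k" for k
          unfolding dops by (rule contr[OF that xb])
      qed
      define D0 where "D0 = c * C1 * ?x 0"
      have D0: "0 \<le> D0" unfolding D0_def using c C1 seq_norm_nonneg[OF xb, of 0] by simp
      have st: "\<bar>PL (iter_seq a f (Suc k)) (Suc k) x - PL (iter_seq a f k) k x\<bar> \<le> D0 * \<eta> ^ k" for k x
      proof -
        have "\<bar>PL (iter_seq a f (Suc k)) (Suc k) x - PL (iter_seq a f k) k x\<bar>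
            \<le> nb N (a k) * (real_of_int (N+2) * ?x k) + ?x k"
          using PL_step[OF sa rca fb[OF f, of k] N(1), where k=k and x=x] by simp
        also have "\<dots> \<le> A * (real_of_int (N+2) * ?x k) + ?x k"
          using N(1) seq_norm_nonneg[OF xb, of k] by (intro add_right_mono mult_right_mono ba) auto
        also have "\<dots> = c * ?x k" unfolding c_def by (simp add: algebra_simps)
        also have "\<dots> \<le> c * (C1 * \<eta> ^ k * ?x 0)" using c gr[of k] by (intro mult_left_mono) auto
        also have "\<dots> = D0 * \<eta> ^ k" unfolding D0_def by (simp add: algebra_simps)
        finally show ?thesis .
      qed
      obtain l where l: "uniform_limit UNIV (\<lambda>k x. PL (iter_seq a f k) k x) l sequentially"
          "\<And>k x. \<bar>l x - PL (iter_seq a f k) k x\<bar> \<le> D0 * \<eta> ^ k / (1 - \<eta>)"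
        using unif[of "\<lambda>k x. PL (iter_seq a f k) k x" D0 \<eta>, OF st eta0 eta(2) D0] by blast
      have "D0 * \<eta> ^ k / (1 - \<eta>) = D * \<eta> ^ k * seq_norm (diff f)" for k
        unfolding D0_def D_def by simp
      then show "\<exists>l. uniform_limit UNIV (\<lambda>k x. PL (iter_seq a f k) k x) l sequentially
       \<and> (\<forall>k x. \<bar>l x - PL (iter_seq a f k) k x\<bar> \<le> D * \<eta> ^ k * seq_norm (diff f))"
        using l by metis
    qed
    then show ?thesis using D by blast
  qed
  have part1: "convergent_scheme a"
  proof -
    have r1: "root n ?mu < 1" using assms(3,4) by simp
    define \<eta> where "\<eta> = (root n ?mu + 1) / 2"
    have "root n ?mu < \<eta>" "\<eta> < 1" unfolding \<eta>_def using r1 by simp_all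
    then show ?thesis using key unfolding convergent_scheme_def by blast
  qed
  have part2: "\<exists>C>0. \<forall>f. bounded_seq f \<longrightarrow> (\<forall>k. \<forall>x.
         \<bar>limit_fun a f x - PL (iter_seq a f (Suc k)) (Suc k) x\<bar> \<le> C * \<eta> ^ k * seq_norm (diff f))"
    if eta: "root n ?mu < \<eta>" "\<eta> < 1" for \<eta>
  proof -
    have eta0: "0 < \<eta>" using eta real_root_ge_zero[OF mu0, of n] by linarith
    obtain D where D: "D > 0" and Dl: "\<And>f. bounded_seq f \<Longrightarrow> (\<exists>l. uniform_limit UNIV (\<lambda>k x. PL (iter_seq a f k) k x) l sequentially
       \<and> (\<forall>k x. \<bar>l x - PL (iter_seq a f k) k x\<bar> \<le> D * \<eta> ^ k * seq_norm (diff f)))"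
      using key[OF eta] by blast
    have "\<forall>f. bounded_seq f \<longrightarrow> (\<forall>k. \<forall>x.
         \<bar>limit_fun a f x - PL (iter_seq a f (Suc k)) (Suc k) x\<bar> \<le> D * \<eta> ^ k * seq_norm (diff f))"
    proof (intro allI impI)
      fix f k x assume f: "bounded_seq f"
      obtain l where l: "uniform_limit UNIV (\<lambda>k x. PL (iter_seq a f k) k x) l sequentially"
        "\<And>k x. \<bar>l x - PL (iter_seq a f k) k x\<bar> \<le> D * \<eta> ^ k * seq_norm (diff f)"
        using Dl[OF f] by blast
      have "\<bar>limit_fun a f x - PL (iter_seq a f (Suc k)) (Suc k) x\<bar> \<le> D * \<eta> ^ Suc k * seq_norm (diff f)"
        unfolding limit_fun_eq[OF l(1)] by (rule l(2))
      also have "\<dots> \<le> D * \<eta> ^ k * seq_norm (diff f)"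
      proof -
        have "\<eta> ^ Suc k \<le> \<eta> ^ k" using eta eta0 by (simp add: mult_left_le_one_le)
        then show ?thesis using D seq_norm_nonneg[OF bounded_diff[OF f]]
          by (intro mult_right_mono mult_left_mono) auto
      qed
      finally show "\<bar>limit_fun a f x - PL (iter_seq a f (Suc k)) (Suc k) x\<bar> \<le> D * \<eta> ^ k * seq_norm (diff f)" .
    qed
    then show ?thesis using D by blast
  qed
  show ?thesis using part1 part2 by blast
qed


end
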